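(* If $p$ is a two-phase solution of the focusing NLS equation, then $\nu_1$ and $\nu_2$ are bounded: there is $M>0$ with $\nu_1(x,t)^2+\nu_2(x,t)^2<M$ for all $(x,t)\in\mathbb R^2$.
   Context: Let $p(x,t)$, $(x,t)\in\mathbb R^2$, be a smooth complex-valued solution of the focusing nonlinear Schrödinger equation $ip_t+p_{xx}+2|p|^2p=0$; $^*$ denotes complex conjugation and subscripts denote partial derivatives. Put $\mathbb U=\begin{pmatrix}-i\lambda& ip\\ ip^*& i\lambda\end{pmatrix}$ and $\mathbb V=\begin{pmatrix}-2i\lambda^2+i|p|^2& 2i\lambda p-p_x\\ 2i\lambda p^*+p^*_x& 2i\lambda^2-i|p|^2\end{pmatrix}$. The solution $p$ is called a two-phase solution if there exist real constants $c_0,c_1,c_2$ such that the matrix $\Psi=\begin{pmatrix}\Psi_{11}&\Psi_{12}\\ \Psi_{21}&-\Psi_{11}\end{pmatrix}$ with $\Psi_{11}=-i\lambda^3-ic_2\lambda^2+(\tfrac12 i|p|^2-ic_1)\lambda+\tfrac14(pp^*_x-p_xp^* )+\tfrac12 ic_2|p|^2-ic_0$, $\Psi_{12}=ip\lambda^2+(-\tfrac12p_x+ic_2p)\lambda-\tfrac14 ip_{xx}-\tfrac12 ip|p|^2-\tfrac12c_2p_x+ic_1p$, $\Psi_{21}=ip^*\lambda^2+(\tfrac12p^*_x+ic_2p^* )\lambda-\tfrac14 ip^*_{xx}-\tfrac12 ip^*|p|^2+\tfrac12c_2p^*_x+ic_1p^*$ satisfies $\Psi_x=[\mathbb U,\Psi]$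 and $\Psi_t=[\mathbb V,\Psi]$ identically in $\lambda\in\mathbb C$. Set $\nu_1=|p|^2$ and $\nu_2=i(p^*p_x-pp^*_x)$ (both real). *)

theory Defs
  imports "HOL-Analysis.Analysis"
begin

definition Dx :: "(real \<Rightarrow> real \<Rightarrow> 'a::real_normed_vector) \<Rightarrow> real \<Rightarrow> real \<Rightarrow> 'a" where
  "Dx f x t = vector_derivative (\<lambda>y. f y t) (at x)"

definition Dt :: "(real \<Rightarrow> real \<Rightarrow> 'a::real_normed_vector) \<Rightarrow> real \<Rightarrow> real \<Rightarrow> 'a" where
  "Dt f x t = vector_derivative (\<lambda>s. f x s) (at t)"

text \<open>Smoothness (C-infinity on R^2): f is (Frechet) differentiable everywhere with
  differential given by its partial derivatives, and the partial derivatives are again smooth.\<close>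
coinductive smooth2 :: "(real \<Rightarrow> real \<Rightarrow> complex) \<Rightarrow> bool" where
  "(\<And>x t. ((\<lambda>z. f (fst z) (snd z)) has_derivative
              (\<lambda>h. fst h *\<^sub>R Dx f x t + snd h *\<^sub>R Dt f x t)) (at (x, t)))
   \<Longrightarrow> smooth2 (Dx f) \<Longrightarrow> smooth2 (Dt f) \<Longrightarrow> smooth2 f"

definition mat2 :: "complex \<Rightarrow> complex \<Rightarrow> complex \<Rightarrow> complex \<Rightarrow> complex^2^2" where
  "mat2 a b c d = (\<chi> i j. if i = 1 then (if j = 1 then a else b) else (if j = 1 then c else d))"

definition commutator :: "complex^2^2 \<Rightarrow> complex^2^2 \<Rightarrow> complex^2^2" where
  "commutator A B = A ** B - B ** A"

definition focusing_NLS :: "(real \<Rightarrow> real \<Rightarrow> complex) \<Rightarrow> bool" where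
  "focusing_NLS p \<longleftrightarrow> (\<forall>x t. \<i> * Dt p x t + Dx (Dx p) x t + 2 * (of_real ((cmod (p x t))\<^sup>2)) * p x t = 0)"

definition UU :: "(real \<Rightarrow> real \<Rightarrow> complex) \<Rightarrow> real \<Rightarrow> real \<Rightarrow> complex \<Rightarrow> complex^2^2" where
  "UU p x t lam = mat2 (- \<i> * lam) (\<i> * p x t) (\<i> * cnj (p x t)) (\<i> * lam)"

definition VV :: "(real \<Rightarrow> real \<Rightarrow> complex) \<Rightarrow> real \<Rightarrow> real \<Rightarrow> complex \<Rightarrow> complex^2^2" where
  "VV p x t lam = (let q = p x t; qx = Dx p x t; a = of_real ((cmod q)\<^sup>2) in
     mat2 (- 2 * \<i> * lam\<^sup>2 + \<i> * a) (2 * \<i> * lam * q - qx)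
          (2 * \<i> * lam * cnj q + cnj qx) (2 * \<i> * lam\<^sup>2 - \<i> * a))"

definition Psi :: "real \<Rightarrow> real \<Rightarrow> real \<Rightarrow> (real \<Rightarrow> real \<Rightarrow> complex) \<Rightarrow> real \<Rightarrow> real \<Rightarrow> complex \<Rightarrow> complex^2^2" where
  "Psi c0 c1 c2 p x t lam = (let q = p x t; qx = Dx p x t; qxx = Dx (Dx p) x t;
       a = of_real ((cmod q)\<^sup>2);
       P11 = - \<i> * lam^3 - \<i> * c2 * lam\<^sup>2 + (\<i>/2 * a - \<i> * c1) * lam
             + (q * cnj qx - qx * cnj q) / 4 + \<i>/2 * c2 * a - \<i> * c0;
       P12 = \<i> * q * lam\<^sup>2 + (- qx / 2 + \<i> * c2 * q) * lam - \<i>/4 * qxx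
             - \<i>/2 * q * a - c2/2 * qx + \<i> * c1 * q;
       P21 = \<i> * cnj q * lam\<^sup>2 + (cnj qx / 2 + \<i> * c2 * cnj q) * lam - \<i>/4 * cnj qxx
             - \<i>/2 * cnj q * a + c2/2 * cnj qx + \<i> * c1 * cnj q
     in mat2 P11 P12 P21 (- P11))"

definition two_phase :: "(real \<Rightarrow> real \<Rightarrow> complex) \<Rightarrow> bool" where
  "two_phase p \<longleftrightarrow> (\<exists>c0 c1 c2 :: real. \<forall>lam::complex. \<forall>x t.
      Dx (\<lambda>y s. Psi c0 c1 c2 p y s lam) x t = commutator (UU p x t lam) (Psi c0 c1 c2 p x t lam) \<and>
      Dt (\<lambda>y s. Psi c0 c1 c2 p y s lam) x t = commutator (VV p x t lam) (Psi c0 c1 c2 p x t lam))"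

definition nu1 :: "(real \<Rightarrow> real \<Rightarrow> complex) \<Rightarrow> real \<Rightarrow> real \<Rightarrow> real" where
  "nu1 p x t = (cmod (p x t))\<^sup>2"

definition nu2 :: "(real \<Rightarrow> real \<Rightarrow> complex) \<Rightarrow> real \<Rightarrow> real \<Rightarrow> real" where
  "nu2 p x t = Re (\<i> * (cnj (p x t) * Dx p x t - p x t * cnj (Dx p x t)))"

end

theory Submission imports Defs begin

lemma mat2_nth[simp]:
  "mat2 a b c d $ 1 $ 1 = a" "mat2 a b c d $ 1 $ 2 = b"
  "mat2 a b c d $ 2 $ 1 = c" "mat2 a b c d $ 2 $ 2 = d"
  by (simp_all add: mat2_def)

lemma mat2_eta: "M = mat2 (M$1$1) (M$1$2) (M$2$1) (M$2$2)"
  by (simp add: vec_eq_iff forall_2 mat2_def)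

lemma mat2_inj: "mat2 a b c d = mat2 a' b' c' d' \<Longrightarrow> a = a' \<and> b = b' \<and> c = c' \<and> d = d'"
  by (metis mat2_nth)

lemma commutator_mat2:
  "commutator (mat2 u11 u12 u21 u22) (mat2 a b c d) =
   mat2 (u12*c - b*u21) (u11*b + u12*d - a*u12 - b*u22)
        (u21*a + u22*c - c*u11 - d*u21) (u21*b - c*u12)"
  by (simp add: commutator_def vec_eq_iff forall_2 mat2_def matrix_matrix_mult_def sum_2 algebra_simps)

lemma linear_mat2: "linear (\<lambda>(v::complex\<times>complex\<times>complex\<times>complex). case v of (a,b,c,d) \<Rightarrow> mat2 a b c d)"
  by (rule linearI) (auto simp: mat2_def vec_eq_iff forall_2)

lemma bl_mat2: "bounded_linear (\<lambda>(v::complex\<times>complex\<times>complex\<times>complex). case v of (a,b,c,d) \<Rightarrow> mat2 a b c d)"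
  using linear_mat2 linear_conv_bounded_linear by blast

lemma mat2_has_vd:
  assumes "(a has_vector_derivative a') (at s)" "(b has_vector_derivative b') (at s)"
    "(c has_vector_derivative c') (at s)" "(d has_vector_derivative d') (at s)"
  shows "((\<lambda>s. mat2 (a s) (b s) (c s) (d s)) has_vector_derivative mat2 a' b' c' d') (at s)"
proof -
  have "((\<lambda>s. (a s, b s, c s, d s)) has_vector_derivative (a', b', c', d')) (at s)"
    using assms by (intro has_vector_derivative_Pair) auto
  from bounded_linear.has_vector_derivative[OF bl_mat2 this] show ?thesis by simp
qed

lemma cnj_differentiable: "(f::real \<Rightarrow> complex) differentiable (at x) \<Longrightarrow> (\<lambda>s. cnj (f s)) differentiable (at x)"
  using has_vector_derivative_cnj vector_derivative_works
  by (metis differentiableI_vector)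


lemma conserved:
  fixes F U :: "real \<Rightarrow> complex^2^2" and a b c :: "real \<Rightarrow> complex"
  assumes F: "\<And>s. F s = mat2 (a s) (b s) (c s) (- a s)"
    and da: "\<And>s. a differentiable (at s)" and db: "\<And>s. b differentiable (at s)"
    and dc: "\<And>s. c differentiable (at s)"
    and D: "\<And>s. vector_derivative F (at s) = commutator (U s) (F s)"
  shows "a s ^2 + b s * c s = a 0 ^2 + b 0 * c 0"
proof -
  define g where "g s = a s ^2 + b s * c s" for s
  have "(g has_derivative (\<lambda>h. 0)) (at s within UNIV)" for s
  proof -
    let ?a = "vector_derivative a (at s)" and ?b = "vector_derivative b (at s)"
      and ?c = "vector_derivative c (at s)"
    have ha: "(a has_vector_derivative ?a) (at s)" using da vector_derivative_works by blast
    have hb: "(b has_vector_derivative ?b) (at s)" using db vector_derivative_works by blast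
    have hc: "(c has_vector_derivative ?c) (at s)" using dc vector_derivative_works by blast
    have hma: "((\<lambda>s. - a s) has_vector_derivative - ?a) (at s)"
      using ha by (rule derivative_intros)
    have HM: "((\<lambda>s. mat2 (a s) (b s) (c s) (- a s)) has_vector_derivative mat2 ?a ?b ?c (- ?a)) (at s)"
      by (rule mat2_has_vd[OF ha hb hc hma])
    hence "(F has_vector_derivative mat2 ?a ?b ?c (- ?a)) (at s)"
      proof - have "F = (\<lambda>s. mat2 (a s) (b s) (c s) (- a s))" using F by auto thus ?thesis using HM by simp qed
    hence "mat2 ?a ?b ?c (- ?a) = commutator (U s) (F s)"
      using D vector_derivative_at by metis
    also have "\<dots> = commutator (mat2 (U s$1$1) (U s$1$2) (U s$2$1) (U s$2$2)) (mat2 (a s) (b s) (c s) (- a s))"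
      using F mat2_eta by metis
    finally have E: "?a = U s$1$2 * c s - b s * U s$2$1"
      "?b = U s$1$1 * b s + U s$1$2 * (- a s) - a s * U s$1$2 - b s * U s$2$2"
      "?c = U s$2$1 * a s + U s$2$2 * c s - c s * U s$1$1 - (- a s) * U s$2$1"
      unfolding commutator_mat2 by (auto dest!: mat2_inj)
    have "(g has_vector_derivative (2 * a s * ?a + ?b * c s + b s * ?c)) (at s)"
      unfolding g_def using ha hb hc
      by (auto intro!: derivative_eq_intros simp: has_vector_derivative_def power2_eq_square algebra_simps)
    moreover have "2 * a s * ?a + ?b * c s + b s * ?c = 0"
      unfolding E by (simp add: algebra_simps)
    ultimately show ?thesis by (simp add: has_vector_derivative_def)
  qed
  then obtain k where "\<forall>x\<in>UNIV. g x = k"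
    using has_derivative_zero_constant[of UNIV g] by auto
  thus ?thesis unfolding g_def by simp
qed

lemma smooth_x: "smooth2 f \<Longrightarrow> (\<lambda>y. f y t) differentiable (at x)"
proof -
  assume "smooth2 f"
  then have H: "((\<lambda>z. f (fst z) (snd z)) has_derivative
              (\<lambda>h. fst h *\<^sub>R Dx f x t + snd h *\<^sub>R Dt f x t)) (at (x, t))"
    by (cases rule: smooth2.cases) auto
  have "((\<lambda>y. (y,t)) has_derivative (\<lambda>h. (h,0))) (at x)"
    by (auto intro!: derivative_eq_intros)
  from has_derivative_compose[OF this, of "\<lambda>z. f (fst z) (snd z)"] H
  show ?thesis by (auto simp: differentiable_def)
qed

lemma smooth_t: "smooth2 f \<Longrightarrow> (\<lambda>s. f x s) differentiable (at t)"
proof -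
  assume "smooth2 f"
  then have H: "((\<lambda>z. f (fst z) (snd z)) has_derivative
              (\<lambda>h. fst h *\<^sub>R Dx f x t + snd h *\<^sub>R Dt f x t)) (at (x, t))"
    by (cases rule: smooth2.cases) auto
  have "((\<lambda>s. (x,s)) has_derivative (\<lambda>h. (0,h))) (at t)"
    by (auto intro!: derivative_eq_intros)
  from has_derivative_compose[OF this, of "\<lambda>z. f (fst z) (snd z)"] H
  show ?thesis by (auto simp: differentiable_def)
qed

lemma smooth_Dx: "smooth2 f \<Longrightarrow> smooth2 (Dx f)"
  by (cases rule: smooth2.cases) auto


definition e11 :: "real \<Rightarrow> real \<Rightarrow> real \<Rightarrow> complex \<Rightarrow> complex \<Rightarrow> complex \<Rightarrow> complex \<Rightarrow> complex" where
  "e11 c0 c1 c2 lam q qx qxx = (let a = q * cnj q in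
     - \<i> * lam^3 - \<i> * c2 * lam\<^sup>2 + (\<i>/2 * a - \<i> * c1) * lam
             + (q * cnj qx - qx * cnj q) / 4 + \<i>/2 * c2 * a - \<i> * c0)"
definition e12 :: "real \<Rightarrow> real \<Rightarrow> real \<Rightarrow> complex \<Rightarrow> complex \<Rightarrow> complex \<Rightarrow> complex \<Rightarrow> complex" where
  "e12 c0 c1 c2 lam q qx qxx = (let a = q * cnj q in
     \<i> * q * lam\<^sup>2 + (- qx / 2 + \<i> * c2 * q) * lam - \<i>/4 * qxx
             - \<i>/2 * q * a - c2/2 * qx + \<i> * c1 * q)"
definition e21 :: "real \<Rightarrow> real \<Rightarrow> real \<Rightarrow> complex \<Rightarrow> complex \<Rightarrow> complex \<Rightarrow> complex \<Rightarrow> complex" where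
  "e21 c0 c1 c2 lam q qx qxx = (let a = q * cnj q in
     \<i> * cnj q * lam\<^sup>2 + (cnj qx / 2 + \<i> * c2 * cnj q) * lam - \<i>/4 * cnj qxx
             - \<i>/2 * cnj q * a + c2/2 * cnj qx + \<i> * c1 * cnj q)"

lemma Psi_mat2: "Psi c0 c1 c2 p x t lam =
  mat2 (e11 c0 c1 c2 lam (p x t) (Dx p x t) (Dx (Dx p) x t))
       (e12 c0 c1 c2 lam (p x t) (Dx p x t) (Dx (Dx p) x t))
       (e21 c0 c1 c2 lam (p x t) (Dx p x t) (Dx (Dx p) x t))
       (- e11 c0 c1 c2 lam (p x t) (Dx p x t) (Dx (Dx p) x t))"
  unfolding Psi_def e11_def e12_def e21_def Let_def complex_norm_square by simp

lemma e_diff: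
  fixes f g h :: "real \<Rightarrow> complex"
  assumes "f differentiable (at s)" "g differentiable (at s)" "h differentiable (at s)"
  shows "(\<lambda>y. e11 c0 c1 c2 lam (f y) (g y) (h y)) differentiable (at s)"
    "(\<lambda>y. e12 c0 c1 c2 lam (f y) (g y) (h y)) differentiable (at s)"
    "(\<lambda>y. e21 c0 c1 c2 lam (f y) (g y) (h y)) differentiable (at s)"
  using assms cnj_differentiable[OF assms(1)] cnj_differentiable[OF assms(2)] cnj_differentiable[OF assms(3)]
  unfolding e11_def e12_def e21_def Let_def
  by (auto intro!: derivative_intros)


definition Qf where "Qf c0 c1 c2 p lam x t =
  (e11 c0 c1 c2 lam (p x t) (Dx p x t) (Dx (Dx p) x t))^2 +
  e12 c0 c1 c2 lam (p x t) (Dx p x t) (Dx (Dx p) x t) * e21 c0 c1 c2 lam (p x t) (Dx p x t) (Dx (Dx p) x t)"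

lemma Q_const:
  assumes sm: "smooth2 p" and TP: "\<forall>lam::complex. \<forall>x t.
      Dx (\<lambda>y s. Psi c0 c1 c2 p y s lam) x t = commutator (UU p x t lam) (Psi c0 c1 c2 p x t lam) \<and>
      Dt (\<lambda>y s. Psi c0 c1 c2 p y s lam) x t = commutator (VV p x t lam) (Psi c0 c1 c2 p x t lam)"
  shows "Qf c0 c1 c2 p lam x t = Qf c0 c1 c2 p lam 0 0"
proof -
  have s1: "smooth2 (Dx p)" and s2: "smooth2 (Dx (Dx p))" using sm smooth_Dx by blast+
  have X: "Qf c0 c1 c2 p lam x t = Qf c0 c1 c2 p lam 0 t" for x t
    unfolding Qf_def
  proof (rule conserved[where F = "\<lambda>y. Psi c0 c1 c2 p y t lam" and U = "\<lambda>y. UU p y t lam"])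
    show "\<And>s. Psi c0 c1 c2 p s t lam = mat2 (e11 c0 c1 c2 lam (p s t) (Dx p s t) (Dx (Dx p) s t))
       (e12 c0 c1 c2 lam (p s t) (Dx p s t) (Dx (Dx p) s t))
       (e21 c0 c1 c2 lam (p s t) (Dx p s t) (Dx (Dx p) s t))
       (- e11 c0 c1 c2 lam (p s t) (Dx p s t) (Dx (Dx p) s t))" by (rule Psi_mat2)
    show "\<And>s. vector_derivative (\<lambda>y. Psi c0 c1 c2 p y t lam) (at s) =
          commutator (UU p s t lam) (Psi c0 c1 c2 p s t lam)"
      using TP unfolding Dx_def by blast
  qed (rule e_diff smooth_x[OF sm] smooth_x[OF s1] smooth_x[OF s2])+
  have T: "Qf c0 c1 c2 p lam x t = Qf c0 c1 c2 p lam x 0" for x t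
    unfolding Qf_def
  proof (rule conserved[where F = "\<lambda>s. Psi c0 c1 c2 p x s lam" and U = "\<lambda>s. VV p x s lam"])
    show "\<And>s. Psi c0 c1 c2 p x s lam = mat2 (e11 c0 c1 c2 lam (p x s) (Dx p x s) (Dx (Dx p) x s))
       (e12 c0 c1 c2 lam (p x s) (Dx p x s) (Dx (Dx p) x s))
       (e21 c0 c1 c2 lam (p x s) (Dx p x s) (Dx (Dx p) x s))
       (- e11 c0 c1 c2 lam (p x s) (Dx p x s) (Dx (Dx p) x s))" by (rule Psi_mat2)
    show "\<And>s. vector_derivative (\<lambda>s. Psi c0 c1 c2 p x s lam) (at s) =
          commutator (VV p x s lam) (Psi c0 c1 c2 p x s lam)"
      using TP unfolding Dt_def by blast
  qed (rule e_diff smooth_t[OF sm] smooth_t[OF s1] smooth_t[OF s2])+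
  show ?thesis using X T by metis
qed


lemma cmod_sq: "cmod q * cmod q = Re q * Re q + Im q * Im q"
  by (metis cmod_power2 power2_eq_square)

lemma sq_aux: "(\<i> * of_real a)^2 + b * (- cnj b) = - of_real (a^2 + (cmod b)^2)"
proof -
  have "(of_real (cmod b))^2 = b * cnj b" using complex_norm_square[of b] by simp
  thus ?thesis by (simp add: power_mult_distrib algebra_simps)
qed

lemma e11_real: "e11 c0 c1 c2 (of_real r) q qx qxx = \<i> * of_real (- (r ^ 3) - c2 * r^2 + ((cmod q)^2/2 - c1) * r
   + Re (\<i> * (cnj q * qx - q * cnj qx)) / 4 + c2 * (cmod q)^2 / 2 - c0)"
  unfolding e11_def Let_def
  by (simp add: complex_eq_iff cmod_sq power2_eq_square power3_eq_cube algebra_simps)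

lemma e21_real: "e21 c0 c1 c2 (of_real r) q qx qxx = - cnj (e12 c0 c1 c2 (of_real r) q qx qxx)"
  unfolding e12_def e21_def Let_def
  by (simp add: complex_eq_iff power2_eq_square algebra_simps)

lemma Q_real: "(e11 c0 c1 c2 (of_real r) q qx qxx)^2 + e12 c0 c1 c2 (of_real r) q qx qxx * e21 c0 c1 c2 (of_real r) q qx qxx
  = - of_real ((- (r ^ 3) - c2 * r^2 + ((cmod q)^2/2 - c1) * r
   + Re (\<i> * (cnj q * qx - q * cnj qx)) / 4 + c2 * (cmod q)^2 / 2 - c0)^2 + (cmod (e12 c0 c1 c2 (of_real r) q qx qxx))^2)"
  unfolding e11_real e21_real by (rule sq_aux)


lemma abs_le_sq: "a^2 \<le> (k::real) \<Longrightarrow> \<bar>a\<bar> \<le> 1 + k"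
proof -
  assume "a^2 \<le> k"
  have "0 \<le> (\<bar>a\<bar> - 1)^2" by simp
  also have "\<dots> = a^2 - 2*\<bar>a\<bar> + 1" by (simp add: power2_eq_square algebra_simps)
  finally have "2*\<bar>a\<bar> \<le> a^2 + 1" by simp
  moreover have "0 \<le> a^2" by simp
  ultimately show ?thesis using \<open>a^2 \<le> k\<close> by linarith
qed

lemma sq_le_of_abs: "\<bar>a\<bar> \<le> (b::real) \<Longrightarrow> a^2 \<le> b^2"
  by (metis abs_ge_zero order_trans power2_abs power_mono)

lemma lin_aux: "(n::real) = 4*(a - w/2 + c) \<Longrightarrow> \<bar>w\<bar> \<le> W \<Longrightarrow> \<bar>a\<bar> \<le> 1 + k \<Longrightarrow> \<bar>n\<bar> \<le> 4*(1 + k + W/2 + \<bar>c\<bar>)"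
  unfolding ring_distribs by (auto simp: abs_le_iff abs_real_def split: if_splits)

lemma lin_aux1: "(n::real) = 2*(a - b + c) \<Longrightarrow> \<bar>a\<bar> \<le> 1 + k \<Longrightarrow> \<bar>b\<bar> \<le> 1 + j \<Longrightarrow> \<bar>n\<bar> \<le> 2*(2 + j + k + \<bar>c\<bar>)"
  unfolding ring_distribs by (auto simp: abs_le_iff abs_real_def split: if_splits)

theorem mainTheorem15:
  fixes p :: "real \<Rightarrow> real \<Rightarrow> complex"
  assumes "smooth2 p" and "focusing_NLS p" and "two_phase p"
  shows "\<exists>M>0. \<forall>x t. (nu1 p x t)\<^sup>2 + (nu2 p x t)\<^sup>2 < M"
proof -
  obtain c0 c1 c2 :: real where TP: "\<forall>lam::complex. \<forall>x t.
      Dx (\<lambda>y s. Psi c0 c1 c2 p y s lam) x t = commutator (UU p x t lam) (Psi c0 c1 c2 p x t lam) \<and>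
      Dt (\<lambda>y s. Psi c0 c1 c2 p y s lam) x t = commutator (VV p x t lam) (Psi c0 c1 c2 p x t lam)"
    using assms(3) unfolding two_phase_def by blast
  define K where "K r = cmod (Qf c0 c1 c2 p (of_real r) 0 0)" for r
  define alpha where "alpha r x t = - (r ^ 3) - c2 * r^2 + (nu1 p x t/2 - c1) * r
     + nu2 p x t / 4 + c2 * nu1 p x t / 2 - c0" for r x t
  have AB: "\<bar>alpha r x t\<bar> \<le> 1 + K r" for r x t
  proof -
    have "Qf c0 c1 c2 p (of_real r) x t = Qf c0 c1 c2 p (of_real r) 0 0"
      by (rule Q_const[OF assms(1) TP])
    moreover have "Qf c0 c1 c2 p (of_real r) x t = - of_real ((alpha r x t)^2 + (cmod (e12 c0 c1 c2 (of_real r) (p x t) (Dx p x t) (Dx (Dx p) x t)))^2)"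
      unfolding Qf_def Q_real alpha_def nu1_def nu2_def by simp
    ultimately have "(alpha r x t)^2 + (cmod (e12 c0 c1 c2 (of_real r) (p x t) (Dx p x t) (Dx (Dx p) x t)))^2
        = cmod (Qf c0 c1 c2 p (of_real r) 0 0)"
      by (metis norm_minus_cancel norm_of_real abs_of_nonneg add_nonneg_nonneg zero_le_power2)
    hence "(alpha r x t)^2 \<le> K r" unfolding K_def
      by (metis le_add_same_cancel1 zero_le_power2)
    thus ?thesis by (rule abs_le_sq)
  qed
  define B1 where "B1 = 2 * (2 + K 0 + K 1 + \<bar>1 + c2 + c1\<bar>)"
  define B2 where "B2 = 4 * (1 + K 0 + \<bar>c2\<bar> * B1 / 2 + \<bar>c0\<bar>)"
  have N1: "\<bar>nu1 p x t\<bar> \<le> B1" for x t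
  proof -
    have "nu1 p x t = 2 * (alpha 1 x t - alpha 0 x t + (1 + c2 + c1))"
      unfolding alpha_def by (simp add: algebra_simps)
    thus ?thesis using AB[of 1 x t] AB[of 0 x t] unfolding B1_def by (rule lin_aux1)
  qed
  have N2: "\<bar>nu2 p x t\<bar> \<le> B2" for x t
  proof -
    have "nu2 p x t = 4 * (alpha 0 x t - c2 * nu1 p x t / 2 + c0)"
      unfolding alpha_def by (simp add: algebra_simps)
    moreover have "\<bar>c2 * nu1 p x t\<bar> \<le> \<bar>c2\<bar> * B1"
      unfolding abs_mult using N1[of x t] by (simp add: mult_left_mono)
    ultimately show ?thesis using AB[of 0 x t] unfolding B2_def by (rule lin_aux)
  qed
  show ?thesis
  proof (intro exI[of _ "B1^2 + B2^2 + 1"] conjI allI)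
    show "0 < B1^2 + B2^2 + 1" by (simp add: add_nonneg_pos)
    fix x t
    show "(nu1 p x t)\<^sup>2 + (nu2 p x t)\<^sup>2 < B1^2 + B2^2 + 1"
      using sq_le_of_abs[OF N1[of x t]] sq_le_of_abs[OF N2[of x t]] by linarith
  qed
qed

end
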